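(* Let $\alpha\ge4$ and $B>1$. Let $\mathcal{F}=A_n\circ\cdots\circ A_0$ be a deep learning model in which every block $A_i$ is either a basic block or a residual block, with approximate model $\mathcal{F}^\alpha=A_n^\alpha\circ\cdots\circ A_0^\alpha$. Here a basic block is one of: a linear block $A(\mathbf{x})=\mathbf{A}\mathbf{x}+\mathbf{b}$ (approximation $A^\alpha=A$); a ReLU block (coordinatewise $\max(x,0)$, approximated by applying $\tilde r_{\alpha,B}$ coordinatewise); a max-pooling block with kernel size $k_0\le10$ (each output coordinate the max of a window of $k_0^2$ inputs, approximated by applying $\tilde M_{\alpha,k_0^2,B}$ to each window); or a softmax block $A(\mathbf{x})=(\exp(x_i)/\sum_j\exp(x_j))_i$ (approximation $A^\alpha=A$). A residual block is $R(\mathbf{x})=\mathcal{G}(\mathbf{x})+\mathbf{P}\mathbf{x}$, where $\mathcal{G}$ is a composition of basic blocks and $\mathbf{P}$ is a matrix, with approximation $R^\alpha(\mathbf{x})=\mathcal{G}^\alpha(\mathbf{x})+\mathbf{P}\mathbf{x}$, $\mathcal{G}^\alpha$ being the composition of the approximations of the basic blocks of $\mathcal{G}$. Assume that all inputs to all blocks (including the blocks inside residual blocks), in both the original and the approximate model, have infinity norm at most $B$ for every input $\mathbf{x}$ considered. Then there exists a constant $C$, determined only by the model parameters (and independent of $\alpha$), such that $\|\mathcal{F}^\alpha(\mathbf{x})-\mathcal{F}(\mathbf{x})\|_\infty\le C2^{-\alpha}$ for every such input $\mathbf{x}$.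
   Context: Let $p_\alpha$ be a polynomial such that $m_\alpha(a,b)=\frac{(a+b)+(a-b)p_\alpha(a-b)}{2}$ satisfies $|m_\alpha(a,b)-\max(a,b)|\le2^{-\alpha}$ for all $a,b\in[0,1]$. Define $r_\alpha(x)=\frac{x+xp_\alpha(x)}{2}$ and $\tilde r_{\alpha,B}(x)=B\,r_\alpha(x/B)$. Define $M_{\alpha,1}(x_1)=x_1$, $M_{\alpha,2k}(x_1,\dots,x_{2k})=m_\alpha(M_{\alpha,k}(x_1,\dots,x_k),M_{\alpha,k}(x_{k+1},\dots,x_{2k}))$, $M_{\alpha,2k+1}(x_1,\dots,x_{2k+1})=m_\alpha(M_{\alpha,k}(x_1,\dots,x_k),M_{\alpha,k+1}(x_{k+1},\dots,x_{2k+1}))$, and $\tilde M_{\alpha,n,B}(x_1,\dots,x_n)=B'\big(M_{\alpha,n}(\tfrac{x_1}{B'}+0.5,\dots,\tfrac{x_n}{B'}+0.5)-0.5\big)$ with $B'=B/(0.5-(\lceil\log_2 n\rceil-1)2^{-\alpha})$. *)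

theory Defs
  imports "HOL-Computational_Algebra.Polynomial"
begin

type_synonym vec = "real list"

definition ninf :: "vec \<Rightarrow> real" where
  "ninf v = foldr (\<lambda>t m. max \<bar>t\<bar> m) v 0"

definition vadd :: "vec \<Rightarrow> vec \<Rightarrow> vec" where
  "vadd u v = map2 (+) u v"

definition vsub :: "vec \<Rightarrow> vec \<Rightarrow> vec" where
  "vsub u v = map2 (-) u v"

(* matrix given as list of rows *)
definition matvec :: "real list list \<Rightarrow> vec \<Rightarrow> vec" where
  "matvec A x = map (\<lambda>r. sum_list (map2 (*) r x)) A"

section \<open>Polynomial approximations of max and ReLU (q plays the role of p_alpha)\<close>

definition malpha :: "real poly \<Rightarrow> real \<Rightarrow> real \<Rightarrow> real" where
  "malpha q a b = ((a + b) + (a - b) * poly q (a - b)) / 2"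

definition ralpha :: "real poly \<Rightarrow> real \<Rightarrow> real" where
  "ralpha q x = (x + x * poly q x) / 2"

definition rtilde :: "real poly \<Rightarrow> real \<Rightarrow> real \<Rightarrow> real" where
  "rtilde q B x = B * ralpha q (x / B)"

function Mtree :: "real poly \<Rightarrow> real list \<Rightarrow> real" where
  "Mtree q xs = (if length xs = 0 then 0 else if length xs = 1 then hd xs
     else malpha q (Mtree q (take (length xs div 2) xs)) (Mtree q (drop (length xs div 2) xs)))"
  by pat_completeness auto
termination
proof (relation "measure (\<lambda>(q, xs). length xs)")
  fix q :: "real poly" and xs :: "real list"
  assume h: "\<not> length xs = 0" "\<not> length xs = 1"
  hence "length xs \<ge> 2" by linarith
  hence "length xs div 2 > 0" "length xs div 2 < length xs" by auto
  thus "((q, take (length xs div 2) xs), q, xs) \<in> measure (\<lambda>(q, xs). length xs)"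
    "((q, drop (length xs div 2) xs), q, xs) \<in> measure (\<lambda>(q, xs). length xs)" by auto
qed auto

declare Mtree.simps[simp del]

definition Bprime :: "nat \<Rightarrow> nat \<Rightarrow> real \<Rightarrow> real" where
  "Bprime \<alpha> n B = B / (1/2 - real_of_int (\<lceil>log 2 (real n)\<rceil> - 1) * 2 powr (- real \<alpha>))"

definition Mtilde :: "real poly \<Rightarrow> nat \<Rightarrow> real \<Rightarrow> real list \<Rightarrow> real" where
  "Mtilde q \<alpha> B xs =
     (let B' = Bprime \<alpha> (length xs) B
      in B' * (Mtree q (map (\<lambda>x. x / B' + 1/2) xs) - 1/2))"

(* MaxPool k0 W: each window w in W is a list of k0^2 input indices;
   the output has one coordinate per window. *)
datatype basic_block =
    Linear "real list list" "real list"
  | ReLU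
  | MaxPool nat "nat list list"
  | Softmax

(* Residual G P: R(x) = G(x) + P x, G = composition of basic blocks, applied in list order *)
datatype block = Basic basic_block | Residual "basic_block list" "real list list"

fun eval_basic :: "basic_block \<Rightarrow> vec \<Rightarrow> vec" where
  "eval_basic (Linear A b) x = vadd (matvec A x) b"
| "eval_basic ReLU x = map (\<lambda>t. max t 0) x"
| "eval_basic (MaxPool k0 W) x = map (\<lambda>w. Max (set (map (\<lambda>i. x ! i) w))) W"
| "eval_basic Softmax x = map (\<lambda>t. exp t / sum_list (map exp x)) x"

fun approx_basic :: "real poly \<Rightarrow> nat \<Rightarrow> real \<Rightarrow> basic_block \<Rightarrow> vec \<Rightarrow> vec" where
  "approx_basic q \<alpha> B (Linear A b) x = vadd (matvec A x) b"
| "approx_basic q \<alpha> B ReLU x = map (rtilde q B) x"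
| "approx_basic q \<alpha> B (MaxPool k0 W) x = map (\<lambda>w. Mtilde q \<alpha> B (map (\<lambda>i. x ! i) w)) W"
| "approx_basic q \<alpha> B Softmax x = map (\<lambda>t. exp t / sum_list (map exp x)) x"

definition comp_basic :: "(basic_block \<Rightarrow> vec \<Rightarrow> vec) \<Rightarrow> basic_block list \<Rightarrow> vec \<Rightarrow> vec" where
  "comp_basic ev G x = foldl (\<lambda>v b. ev b v) x G"

fun eval_block :: "(basic_block \<Rightarrow> vec \<Rightarrow> vec) \<Rightarrow> block \<Rightarrow> vec \<Rightarrow> vec" where
  "eval_block ev (Basic b) x = ev b x"
| "eval_block ev (Residual G P) x = vadd (comp_basic ev G x) (matvec P x)"

(* model [A_0, ..., A_n] computes A_n o ... o A_0 *)
definition eval_model :: "(basic_block \<Rightarrow> vec \<Rightarrow> vec) \<Rightarrow> block list \<Rightarrow> vec \<Rightarrow> vec" where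
  "eval_model ev F x = foldl (\<lambda>v blk. eval_block ev blk v) x F"

fun bdim :: "basic_block \<Rightarrow> nat \<Rightarrow> nat option" where
  "bdim (Linear A b) d =
     (if length b = length A \<and> (\<forall>r\<in>set A. length r = d) then Some (length A) else None)"
| "bdim ReLU d = Some d"
| "bdim (MaxPool k0 W) d =
     (if 1 \<le> k0 \<and> k0 \<le> 10 \<and> (\<forall>w\<in>set W. length w = k0\<^sup>2 \<and> (\<forall>i\<in>set w. i < d))
      then Some (length W) else None)"
| "bdim Softmax d = Some d"

fun chain_dim :: "basic_block list \<Rightarrow> nat \<Rightarrow> nat option" where
  "chain_dim [] d = Some d"
| "chain_dim (b # G) d = (case bdim b d of None \<Rightarrow> None | Some d' \<Rightarrow> chain_dim G d')"

fun block_dim :: "block \<Rightarrow> nat \<Rightarrow> nat option" where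
  "block_dim (Basic b) d = bdim b d"
| "block_dim (Residual G P) d =
     (case chain_dim G d of None \<Rightarrow> None
      | Some d' \<Rightarrow> if length P = d' \<and> (\<forall>r\<in>set P. length r = d) then Some d' else None)"

fun model_dim :: "block list \<Rightarrow> nat \<Rightarrow> nat option" where
  "model_dim [] d = Some d"
| "model_dim (blk # F) d = (case block_dim blk d of None \<Rightarrow> None | Some d' \<Rightarrow> model_dim F d')"

definition wf_model :: "nat \<Rightarrow> block list \<Rightarrow> bool" where
  "wf_model d F \<longleftrightarrow> model_dim F d \<noteq> None"

definition bounded_chain :: "(basic_block \<Rightarrow> vec \<Rightarrow> vec) \<Rightarrow> real \<Rightarrow> basic_block list \<Rightarrow> vec \<Rightarrow> bool" where
  "bounded_chain ev B G x \<longleftrightarrow> (\<forall>j<length G. ninf (comp_basic ev (take j G) x) \<le> B)"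

fun bounded_block :: "(basic_block \<Rightarrow> vec \<Rightarrow> vec) \<Rightarrow> real \<Rightarrow> block \<Rightarrow> vec \<Rightarrow> bool" where
  "bounded_block ev B (Basic b) x \<longleftrightarrow> ninf x \<le> B"
| "bounded_block ev B (Residual G P) x \<longleftrightarrow> ninf x \<le> B \<and> bounded_chain ev B G x"

definition bounded_model :: "(basic_block \<Rightarrow> vec \<Rightarrow> vec) \<Rightarrow> real \<Rightarrow> block list \<Rightarrow> vec \<Rightarrow> bool" where
  "bounded_model ev B F x \<longleftrightarrow>
     (\<forall>j<length F. bounded_block ev B (F ! j) (eval_model ev (take j F) x))"

end

theory Submission
  imports Defs
begin


lemma ninf_Cons[simp]: "ninf (t # v) = max \<bar>t\<bar> (ninf v)" by (simp add: ninf_def)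
lemma ninf_Nil[simp]: "ninf [] = 0" by (simp add: ninf_def)

lemma ninf_nonneg: "0 \<le> ninf v" by (induct v) auto

lemma ninf_nth: "i < length v \<Longrightarrow> \<bar>v ! i\<bar> \<le> ninf v"
proof (induct v arbitrary: i)
  case Nil then show ?case by simp
next
  case (Cons a v) then show ?case by (cases i) force+
qed

lemma ninf_le: "0 \<le> c \<Longrightarrow> (\<And>i. i < length v \<Longrightarrow> \<bar>v ! i\<bar> \<le> c) \<Longrightarrow> ninf v \<le> c"
proof (induct v)
  case Nil then show ?case by simp
next
  case (Cons a v)
  have "\<bar>a\<bar> \<le> c" using Cons(3)[of 0] by simp
  moreover have "ninf v \<le> c" using Cons(1)[OF Cons(2)] Cons(3)[of "Suc _"] by auto
  ultimately show ?case by simp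
qed

lemma vsub_len[simp]: "length (vsub u v) = min (length u) (length v)" by (simp add: vsub_def)
lemma vsub_nth[simp]: "i < length u \<Longrightarrow> i < length v \<Longrightarrow> vsub u v ! i = u ! i - v ! i" by (simp add: vsub_def)
lemma vadd_len[simp]: "length (vadd u v) = min (length u) (length v)" by (simp add: vadd_def)
lemma vadd_nth[simp]: "i < length u \<Longrightarrow> i < length v \<Longrightarrow> vadd u v ! i = u ! i + v ! i" by (simp add: vadd_def)
lemma matvec_len[simp]: "length (matvec A x) = length A" by (simp add: matvec_def)

lemma err_nth: "length u = length v \<Longrightarrow> i < length u \<Longrightarrow> \<bar>u ! i - v ! i\<bar> \<le> ninf (vsub u v)"
  using ninf_nth[of i "vsub u v"] by simp

lemma err_le: "length u = length v \<Longrightarrow> 0 \<le> c \<Longrightarrow> (\<And>i. i < length u \<Longrightarrow> \<bar>u ! i - v ! i\<bar> \<le> c) \<Longrightarrow> ninf (vsub u v) \<le> c"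
  by (rule ninf_le) auto

lemma sum_list_map2: "length xs = length ys \<Longrightarrow> sum_list (map2 f xs ys) = (\<Sum>j<length xs. f (xs ! j) (ys ! j))"
  by (simp add: sum_list_sum_nth atLeast0LessThan)

definition rowL :: "real list list \<Rightarrow> real" where
  "rowL A = sum_list (map (\<lambda>r. sum_list (map abs r)) A)"

lemma rowL_nonneg: "0 \<le> rowL A"
  unfolding rowL_def by (induct A) (auto intro!: add_nonneg_nonneg sum_list_nonneg)

lemma row_le_rowL: "r \<in> set A \<Longrightarrow> sum_list (map abs r) \<le> rowL A"
  unfolding rowL_def
proof (induct A)
  case Nil then show ?case by simp
next
  case (Cons a A)
  have n1: "0 \<le> sum_list (map abs a)" by (auto intro!: sum_list_nonneg)
  have n2: "0 \<le> sum_list (map (\<lambda>r. sum_list (map abs r)) A)"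
    by (auto intro!: sum_list_nonneg)
  from Cons show ?case using n1 n2 by auto
qed

lemma matvec_err:
  assumes "\<forall>r\<in>set A. length r = d" "length x = d" "length x' = d"
  shows "ninf (vsub (matvec A x') (matvec A x)) \<le> rowL A * ninf (vsub x' x)"
proof (rule err_le)
  show "0 \<le> rowL A * ninf (vsub x' x)" using rowL_nonneg ninf_nonneg by simp
  fix i assume i: "i < length (matvec A x')"
  let ?r = "A ! i"
  have r: "?r \<in> set A" using i by simp
  have lr: "length ?r = d" using assms r by auto
  have "matvec A x' ! i - matvec A x ! i = (\<Sum>j<d. ?r ! j * (x' ! j - x ! j))"
    using i lr assms by (simp add: matvec_def sum_list_map2 sum_subtractf[symmetric] algebra_simps)
  also have "\<bar>\<dots>\<bar> \<le> (\<Sum>j<d. \<bar>?r ! j\<bar> * ninf (vsub x' x))"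
    by (rule order_trans[OF sum_abs sum_mono]) (auto simp: abs_mult assms intro!: mult_left_mono err_nth)
  also have "\<dots> = sum_list (map abs ?r) * ninf (vsub x' x)"
    using lr by (simp add: sum_distrib_right sum_list_sum_nth atLeast0LessThan)
  also have "\<dots> \<le> rowL A * ninf (vsub x' x)"
    by (rule mult_right_mono[OF row_le_rowL[OF r] ninf_nonneg])
  finally show "\<bar>matvec A x' ! i - matvec A x ! i\<bar> \<le> rowL A * ninf (vsub x' x)" .
qed simp

lemma vadd_err:
  assumes "length a = n" "length a' = n" "length b = n" "length b' = n"
  shows "ninf (vsub (vadd a' b') (vadd a b)) \<le> ninf (vsub a' a) + ninf (vsub b' b)"
proof (rule err_le)
  show "0 \<le> ninf (vsub a' a) + ninf (vsub b' b)" using ninf_nonneg by (simp add: add_nonneg_nonneg)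
  fix i assume i: "i < length (vadd a' b')"
  have "\<bar>vadd a' b' ! i - vadd a b ! i\<bar> = \<bar>(a' ! i - a ! i) + (b' ! i - b ! i)\<bar>" using i assms by simp
  also have "\<dots> \<le> \<bar>a' ! i - a ! i\<bar> + \<bar>b' ! i - b ! i\<bar>" by (rule abs_triangle_ineq)
  also have "\<dots> \<le> ninf (vsub a' a) + ninf (vsub b' b)"
    using i assms by (intro add_mono err_nth) auto
  finally show "\<bar>vadd a' b' ! i - vadd a b ! i\<bar> \<le> ninf (vsub a' a) + ninf (vsub b' b)" .
qed (use assms in simp)



lemma ralpha_err:
  assumes hq: "\<forall>a\<in>{0..1}. \<forall>b\<in>{0..1}. \<bar>malpha q a b - max a b\<bar> \<le> e"
    and t: "\<bar>t\<bar> \<le> 1"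
  shows "\<bar>ralpha q t - max t 0\<bar> \<le> e"
proof (cases "t \<ge> 0")
  case True
  then have "\<bar>malpha q t 0 - max t 0\<bar> \<le> e" using bspec[OF bspec[OF hq, of t], of 0] t by auto
  then show ?thesis by (simp add: malpha_def ralpha_def)
next
  case False
  then have "\<bar>malpha q 0 (-t) - max 0 (-t)\<bar> \<le> e" using bspec[OF bspec[OF hq, of 0], of "-t"] t by auto
  moreover have "malpha q 0 (-t) - max 0 (-t) = ralpha q t - max t 0"
    using False by (simp add: malpha_def ralpha_def field_simps)
  ultimately show ?thesis by simp
qed

lemma Max_lip:
  assumes "length a = length b" "a \<noteq> []"
    "\<And>j. j < length a \<Longrightarrow> \<bar>a ! j - b ! j\<bar> \<le> e"
  shows "\<bar>Max (set a) - Max (set b) :: real\<bar> \<le> e"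
proof -
  have ab: "Max (set a) \<le> Max (set b) + e" if th: "length a = length b" "a \<noteq> []"
    "\<And>j. j < length a \<Longrightarrow> \<bar>a ! j - b ! j\<bar> \<le> e" for a b :: "real list"
  proof -
    obtain j where j: "j < length a" "a ! j = Max (set a)"
      using Max_in[of "set a"] th(2) by (auto simp: in_set_conv_nth)
    have "b ! j \<le> Max (set b)" using j th(1) by (intro Max_ge) auto
    then show ?thesis using th(3)[OF j(1)] j by linarith
  qed
  have "Max (set a) \<le> Max (set b) + e" using ab assms by blast
  moreover have "Max (set b) \<le> Max (set a) + e"
    using ab[of b a] assms by (fastforce simp: abs_minus_commute)
  ultimately show ?thesis by linarith
qed

lemma exp_lip:
  fixes a b B :: real
  assumes "a \<le> B" "b \<le> B"
  shows "\<bar>exp a - exp b\<bar> \<le> exp B * \<bar>a - b\<bar>"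
proof -
  have h: "exp x - exp y \<le> exp B * \<bar>x - y\<bar>" if "x \<le> B" for x y :: real
  proof -
    have "1 + (y - x) \<le> exp (y - x)" by (rule exp_ge_add_one_self)
    then have "exp x * (1 + (y - x)) \<le> exp x * exp (y - x)" by simp
    then have "exp x - exp y \<le> exp x * (x - y)" by (simp add: exp_diff algebra_simps)
    also have "\<dots> \<le> exp x * \<bar>x - y\<bar>" by simp
    also have "\<dots> \<le> exp B * \<bar>x - y\<bar>" using that by (intro mult_right_mono) auto
    finally show ?thesis .
  qed
  show ?thesis using h[OF assms(1), of b] h[OF assms(2), of a] by (auto simp: abs_minus_commute abs_le_iff)
qed

lemma Mtree_err:
  fixes q :: "real poly" and e :: real
  assumes hq: "\<forall>a\<in>{0..1}. \<forall>b\<in>{0..1}. \<bar>malpha q a b - max a b\<bar> \<le> e"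
    and e0: "0 \<le> e"
  shows "xs \<noteq> [] \<Longrightarrow> length xs \<le> 2 ^ h \<Longrightarrow>
    (\<forall>z\<in>set xs. real h * e - e \<le> z \<and> z \<le> 1 - real h * e + e) \<Longrightarrow>
    \<bar>Mtree q xs - Max (set xs)\<bar> \<le> real h * e"
proof (induct h arbitrary: xs)
  case 0
  then obtain z where "xs = [z]" by (cases xs) auto
  then show ?case by (simp add: Mtree.simps)
next
  case (Suc h)
  show ?case
  proof (cases "length xs = 1")
    case True
    then obtain z where "xs = [z]" by (cases xs) (auto simp: length_Suc_conv)
    then show ?thesis using e0 by (simp add: Mtree.simps)
  next
    case False
    let ?k = "length xs div 2"
    let ?l = "take ?k xs" and ?r = "drop ?k xs"
    have "length xs \<noteq> 0" using Suc(2) by simp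
    then have len2: "length xs \<ge> 2" using False by linarith
    have ln: "?l \<noteq> []" "?r \<noteq> []" using len2 by auto
    have ll: "length ?l \<le> 2 ^ h" "length ?r \<le> 2 ^ h" using Suc(3) by auto
    have sub: "set ?l \<subseteq> set xs" "set ?r \<subseteq> set xs" by (auto dest: in_set_takeD in_set_dropD)
    have bl: "\<forall>z\<in>set ?l. real h * e - e \<le> z \<and> z \<le> 1 - real h * e + e"
             "\<forall>z\<in>set ?r. real h * e - e \<le> z \<and> z \<le> 1 - real h * e + e"
      using Suc(4) sub e0 by (fastforce simp: algebra_simps)+
    have IHl: "\<bar>Mtree q ?l - Max (set ?l)\<bar> \<le> real h * e" using Suc(1)[OF ln(1) ll(1) bl(1)] .
    have IHr: "\<bar>Mtree q ?r - Max (set ?r)\<bar> \<le> real h * e" using Suc(1)[OF ln(2) ll(2) bl(2)] .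
    have Ml: "real h * e \<le> Max (set ?l) \<and> Max (set ?l) \<le> 1 - real h * e"
    proof -
      have "Max (set ?l) \<in> set xs" using Max_in[of "set ?l"] ln(1) sub by auto
      then show ?thesis using Suc(4) by (auto simp: algebra_simps)
    qed
    have Mr: "real h * e \<le> Max (set ?r) \<and> Max (set ?r) \<le> 1 - real h * e"
    proof -
      have "Max (set ?r) \<in> set xs" using Max_in[of "set ?r"] ln(2) sub by auto
      then show ?thesis using Suc(4) by (auto simp: algebra_simps)
    qed
    define a where "a = Mtree q ?l"
    define b where "b = Mtree q ?r"
    have a01: "a \<in> {0..1}" using IHl Ml unfolding a_def by (auto simp: abs_le_iff)
    have b01: "b \<in> {0..1}" using IHr Mr unfolding b_def by (auto simp: abs_le_iff)
    have Mt: "Mtree q xs = malpha q a b"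
      using False len2 \<open>xs \<noteq> []\<close> by (subst Mtree.simps) (simp add: a_def b_def)
    have Mx: "Max (set xs) = max (Max (set ?l)) (Max (set ?r))"
    proof -
      have "set xs = set ?l \<union> set ?r" by (metis append_take_drop_id set_append)
      then show ?thesis using ln by (simp add: Max_Un)
    qed
    have "\<bar>malpha q a b - max a b\<bar> \<le> e" using hq a01 b01 by blast
    moreover have "\<bar>max a b - max (Max (set ?l)) (Max (set ?r))\<bar> \<le> real h * e"
      using IHl IHr unfolding a_def b_def by (auto simp: abs_le_iff max_def)
    ultimately have "\<bar>malpha q a b - max (Max (set ?l)) (Max (set ?r))\<bar> \<le> e + real h * e"
      by linarith
    then show ?thesis unfolding Mt Mx by (simp add: algebra_simps)
  qed
qed



lemma log_facts:
  fixes n :: nat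
  assumes "1 \<le> n" "n \<le> 128"
  defines "h \<equiv> nat \<lceil>log 2 (real n)\<rceil>"
  shows "n \<le> 2 ^ h" "h \<le> 7" "real_of_int (\<lceil>log 2 (real n)\<rceil> - 1) = real h - 1"
proof -
  have l0: "0 \<le> log 2 (real n)" using assms by simp
  then have L0: "0 \<le> \<lceil>log 2 (real n)\<rceil>" by linarith
  then have hL: "real h = real_of_int \<lceil>log 2 (real n)\<rceil>" unfolding h_def by simp
  have lg: "log 2 (real n) \<le> real h" using hL by linarith
  have np: "0 < real n" using assms(1) by simp
  have two: "(1::real) < 2" by simp
  have "real n \<le> 2 powr real h" using log_le_iff[OF two np] lg by blast
  then have "real n \<le> real (2 ^ h)" by (simp add: powr_realpow)
  then show "n \<le> 2 ^ h" by linarith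
  have "log 2 (real n) \<le> real (7::nat)" using assms by (intro log2_of_power_le) auto
  then have "\<lceil>log 2 (real n)\<rceil> \<le> 7" by (simp add: ceiling_le_iff)
  then show "h \<le> 7" unfolding h_def by simp
  show "real_of_int (\<lceil>log 2 (real n)\<rceil> - 1) = real h - 1" using hL by simp
qed

lemma Mtilde_err:
  fixes q :: "real poly"
  assumes hq: "\<forall>a\<in>{0..1}. \<forall>b\<in>{0..1}. \<bar>malpha q a b - max a b\<bar> \<le> 2 powr (- real \<alpha>)"
    and al: "\<alpha> \<ge> 4" and B0: "0 < B"
    and len: "length ys = k0\<^sup>2" "1 \<le> k0" "k0 \<le> 10"
    and yb: "\<forall>y\<in>set ys. \<bar>y\<bar> \<le> B"
  shows "\<bar>Mtilde q \<alpha> B ys - Max (set ys)\<bar> \<le> 56 * B * 2 powr (- real \<alpha>)"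
proof -
  define e where "e = (2::real) powr (- real \<alpha>)"
  define n where "n = length ys"
  define h where "h = nat \<lceil>log 2 (real n)\<rceil>"
  have e0: "0 \<le> e" unfolding e_def by simp
  have e16: "e \<le> 1/16"
  proof -
    have "e \<le> 2 powr (- real (4::nat))" unfolding e_def using al by (intro powr_mono) auto
    then show ?thesis by (simp add: powr_minus powr_realpow)
  qed
  have nk: "n = k0 * k0" unfolding n_def len by (simp add: power2_eq_square)
  have "1 * 1 \<le> k0 * k0" using len by (intro mult_le_mono) auto
  moreover have "k0 * k0 \<le> 10 * 10" using len by (intro mult_le_mono) auto
  ultimately have n1: "1 \<le> n" "n \<le> 128" unfolding nk by auto
  note lf = log_facts[OF n1, folded h_def]
  define D where "D = 1/2 - (real h - 1) * e"
  have BP: "Bprime \<alpha> n B = B / D" unfolding Bprime_def D_def e_def lf(3) by simp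
  have D8: "1/8 \<le> D"
  proof (cases "h = 0")
    case True then show ?thesis unfolding D_def using e0 by simp
  next
    case False
    then have "real h - 1 \<le> 6" "0 \<le> real h - 1" using lf(2) by auto
    then have "(real h - 1) * e \<le> 6 * (1/16)" using e0 e16 by (intro mult_mono) auto
    then show ?thesis unfolding D_def by simp
  qed
  define B' where "B' = B / D"
  have B'0: "0 < B'" unfolding B'_def using B0 D8 by simp
  have B'8: "B' \<le> 8 * B" unfolding B'_def using B0 D8 by (simp add: field_simps)
  define f where "f = (\<lambda>x. x / B' + 1/2)"
  define zs where "zs = map f ys"
  have ne: "ys \<noteq> []" using n1 n_def by auto
  have Mt: "Mtilde q \<alpha> B ys = B' * (Mtree q zs - 1/2)"
    unfolding Mtilde_def Let_def zs_def f_def B'_def BP[unfolded n_def, symmetric] by simp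
  have monof: "mono f" unfolding f_def mono_def using B'0 by (simp add: divide_right_mono)
  have Mz: "Max (set zs) = f (Max (set ys))"
    unfolding zs_def set_map using mono_Max_commute[OF monof, of "set ys"] ne by simp
  have zb: "\<forall>z\<in>set zs. real h * e - e \<le> z \<and> z \<le> 1 - real h * e + e"
  proof
    fix z assume "z \<in> set zs"
    then obtain y where y: "y \<in> set ys" "z = f y" unfolding zs_def by auto
    have "\<bar>y\<bar> \<le> B" using yb y by auto
    moreover have "\<bar>y / B'\<bar> = D * \<bar>y\<bar> / B" unfolding B'_def using D8 B0 by (simp add: abs_mult abs_divide)
    moreover have "D * \<bar>y\<bar> \<le> D * B" using \<open>\<bar>y\<bar> \<le> B\<close> D8 by (intro mult_left_mono) auto
    ultimately have "\<bar>y / B'\<bar> \<le> D" using B0 by (simp add: pos_divide_le_eq)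
    then have "y / B' \<le> D" "- (y / B') \<le> D" using abs_le_D1 abs_le_D2 by blast+
    moreover have "D = 1/2 - real h * e + e" by (simp add: D_def algebra_simps)
    ultimately show "real h * e - e \<le> z \<and> z \<le> 1 - real h * e + e"
      unfolding y f_def by linarith
  qed
  have zl: "length zs \<le> 2 ^ h" using lf(1) unfolding zs_def n_def by simp
  have zne: "zs \<noteq> []" using ne zs_def by simp
  have Mte: "\<bar>Mtree q zs - Max (set zs)\<bar> \<le> real h * e"
    using Mtree_err[OF hq[folded e_def] e0 zne zl zb] .
  have "Mtilde q \<alpha> B ys - Max (set ys) = B' * (Mtree q zs - Max (set zs))"
    unfolding Mt Mz f_def using B'0 by (simp add: field_simps)
  then have "\<bar>Mtilde q \<alpha> B ys - Max (set ys)\<bar> = B' * \<bar>Mtree q zs - Max (set zs)\<bar>"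
    using B'0 by (simp add: abs_mult)
  also have "\<dots> \<le> (8 * B) * (7 * e)"
  proof (rule mult_mono)
    show "\<bar>Mtree q zs - Max (set zs)\<bar> \<le> 7 * e"
    proof -
      have "real h \<le> 7" using lf(2) by simp
      then have "real h * e \<le> 7 * e" using e0 by (rule mult_right_mono)
      then show ?thesis using Mte by linarith
    qed
  qed (use B'8 B0 in auto)
  finally show ?thesis unfolding e_def by simp
qed



lemma ninf_bound_nth: "ninf x \<le> B \<Longrightarrow> i < length x \<Longrightarrow> \<bar>x ! i\<bar> \<le> B"
  using ninf_nth[of i x] by linarith

lemma sum_exp: "sum_list (map exp x) = (\<Sum>j<length x. exp (x ! j :: real))"
  by (simp add: sum_list_sum_nth atLeast0LessThan)

lemma softmax_err:
  fixes x x' :: "real list"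
  assumes len: "length x = d" "length x' = d" and bx: "ninf x \<le> B" "ninf x' \<le> B"
    and i: "i < d"
  shows "\<bar>exp (x' ! i) / sum_list (map exp x') - exp (x ! i) / sum_list (map exp x)\<bar>
         \<le> 2 * exp (2 * B) * ninf (vsub x' x)"
proof -
  define \<delta> where "\<delta> = ninf (vsub x' x)"
  define S where "S = sum_list (map exp x)"
  define S' where "S' = sum_list (map exp x')"
  define a where "a = exp (x' ! i)"
  define b where "b = exp (x ! i)"
  have d0: "\<delta> \<ge> 0" unfolding \<delta>_def by (rule ninf_nonneg)
  have xb: "\<And>j. j < d \<Longrightarrow> \<bar>x ! j\<bar> \<le> B" "\<And>j. j < d \<Longrightarrow> \<bar>x' ! j\<bar> \<le> B"
    using ninf_bound_nth bx len by auto
  have dj: "\<And>j. j < d \<Longrightarrow> \<bar>x' ! j - x ! j\<bar> \<le> \<delta>" unfolding \<delta>_def using len by (intro err_nth) auto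
  have Ssum: "S = (\<Sum>j<d. exp (x ! j))" "S' = (\<Sum>j<d. exp (x' ! j))"
    unfolding S_def S'_def sum_exp len by auto
  have S'lb: "real d * exp (- B) \<le> S'"
  proof -
    have "(\<Sum>j<d. exp (- B)) \<le> (\<Sum>j<d. exp (x' ! j))"
    proof (rule sum_mono)
      fix j assume "j \<in> {..<d}"
      then have "\<bar>x' ! j\<bar> \<le> B" using xb(2) by simp
      then show "exp (- B) \<le> exp (x' ! j)" by (simp add: abs_le_iff)
    qed
    then show ?thesis using Ssum by simp
  qed
  have Sdiff: "\<bar>S - S'\<bar> \<le> real d * exp B * \<delta>"
  proof -
    have "\<bar>S - S'\<bar> = \<bar>\<Sum>j<d. exp (x' ! j) - exp (x ! j)\<bar>"
      unfolding Ssum by (simp add: sum_subtractf abs_minus_commute)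
    also have "\<dots> \<le> (\<Sum>j<d. \<bar>exp (x' ! j) - exp (x ! j)\<bar>)" by (rule sum_abs)
    also have "\<dots> \<le> (\<Sum>j<d. exp B * \<delta>)"
    proof (rule sum_mono)
      fix j assume "j \<in> {..<d}"
      then have j: "j < d" by simp
      have "\<bar>exp (x' ! j) - exp (x ! j)\<bar> \<le> exp B * \<bar>x' ! j - x ! j\<bar>"
        using xb[OF j] by (intro exp_lip) (auto simp: abs_le_iff)
      also have "\<dots> \<le> exp B * \<delta>" using dj[OF j] by simp
      finally show "\<bar>exp (x' ! j) - exp (x ! j)\<bar> \<le> exp B * \<delta>" .
    qed
    finally show ?thesis by simp
  qed
  have bS: "b \<le> S" unfolding Ssum b_def
    using i by (intro member_le_sum) auto
  have aS: "a \<le> S'" unfolding Ssum a_def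
    using i by (intro member_le_sum) auto
  have a_lb: "exp (- B) \<le> a" unfolding a_def using xb(2)[OF i] by (auto simp: abs_le_iff)
  have b0: "0 < b" unfolding b_def by simp
  have S0: "0 < S" using b0 bS by linarith
  have S'0: "0 < S'" using aS a_def by (metis exp_gt_zero order_less_le_trans)
  have ab: "\<bar>a - b\<bar> \<le> exp B * \<delta>"
  proof -
    have "\<bar>a - b\<bar> \<le> exp B * \<bar>x' ! i - x ! i\<bar>" unfolding a_def b_def
      using xb[OF i] by (intro exp_lip) (auto simp: abs_le_iff)
    also have "\<dots> \<le> exp B * \<delta>" using dj[OF i] by simp
    finally show ?thesis .
  qed
  have eq: "a / S' - b / S = (a - b) / S' + (b / S) * ((S - S') / S')"
    using S0 S'0 by (simp add: field_simps)
  have t1: "\<bar>(a - b) / S'\<bar> \<le> exp (2 * B) * \<delta>"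
  proof -
    have ee: "exp (2 * B) * exp (- B) = exp B" by (simp add: exp_add[symmetric])
    have "exp B * \<delta> \<le> exp (2 * B) * \<delta> * exp (- B)"
      using ee by (simp add: algebra_simps)
    also have "\<dots> \<le> exp (2 * B) * \<delta> * S'"
      using a_lb aS d0 by (intro mult_left_mono) auto
    finally have "\<bar>a - b\<bar> \<le> exp (2 * B) * \<delta> * S'" using ab by linarith
    then show ?thesis using S'0 by (simp add: abs_divide pos_divide_le_eq)
  qed
  have t2: "\<bar>(S - S') / S'\<bar> \<le> exp (2 * B) * \<delta>"
  proof -
    have "real d * exp B * \<delta> = exp (2 * B) * \<delta> * (real d * exp (- B))"
    proof -
      have ee: "exp (2 * B) * exp (- B) = exp B" by (simp add: exp_add[symmetric])
      show ?thesis by (simp add: ee[symmetric] algebra_simps)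
    qed
    also have "\<dots> \<le> exp (2 * B) * \<delta> * S'"
      using S'lb d0 by (intro mult_left_mono) auto
    finally have "\<bar>S - S'\<bar> \<le> exp (2 * B) * \<delta> * S'" using Sdiff by linarith
    then show ?thesis using S'0 by (simp add: abs_divide pos_divide_le_eq)
  qed
  have bS1: "\<bar>b / S\<bar> \<le> 1" using b0 S0 bS by simp
  have "\<bar>(b / S) * ((S - S') / S')\<bar> \<le> 1 * (exp (2 * B) * \<delta>)"
    unfolding abs_mult by (rule mult_mono[OF bS1 t2]) auto
  then have "\<bar>a / S' - b / S\<bar> \<le> exp (2 * B) * \<delta> + exp (2 * B) * \<delta>"
    unfolding eq using t1 abs_triangle_ineq[of "(a - b) / S'" "(b / S) * ((S - S') / S')"] by linarith
  then show ?thesis unfolding a_def b_def S_def S'_def \<delta>_def by (simp add: algebra_simps)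
qed



lemma vsub_self: "ninf (vsub c c) = 0"
  using ninf_le[of 0 "vsub c c"] ninf_nonneg[of "vsub c c"] by simp

lemma rtilde_err:
  assumes hq: "\<forall>a\<in>{0..1}. \<forall>b\<in>{0..1}. \<bar>malpha q a b - max a b\<bar> \<le> e"
    and B0: "0 < B" and t: "\<bar>t\<bar> \<le> B"
  shows "\<bar>rtilde q B t - max t 0\<bar> \<le> B * e"
proof -
  have t1: "\<bar>t / B\<bar> \<le> 1" using t B0 by (simp add: abs_divide divide_le_eq)
  have "rtilde q B t - max t 0 = B * (ralpha q (t / B) - max (t / B) 0)"
    using B0 by (simp add: rtilde_def right_diff_distrib max_def field_simps)
  then have "\<bar>rtilde q B t - max t 0\<bar> = B * \<bar>ralpha q (t / B) - max (t / B) 0\<bar>"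
    using B0 by (simp add: abs_mult)
  also have "\<dots> \<le> B * e" using ralpha_err[OF hq t1] B0 by simp
  finally show ?thesis .
qed

lemma basic_err:
  fixes p :: "nat \<Rightarrow> real poly"
  assumes hp: "\<forall>\<alpha>. \<forall>a\<in>{0..1}. \<forall>b\<in>{0..1}. \<bar>malpha (p \<alpha>) a b - max a b\<bar> \<le> 2 powr (- real \<alpha>)"
    and hB: "B > 1" and bd: "bdim b d = Some d'"
  shows "\<exists>L K. 0 \<le> L \<and> (\<forall>\<alpha>\<ge>4. \<forall>x x'. length x = d \<longrightarrow> length x' = d \<longrightarrow> ninf x \<le> B \<longrightarrow> ninf x' \<le> B \<longrightarrow>
      length (approx_basic (p \<alpha>) \<alpha> B b x') = d' \<and> length (eval_basic b x) = d' \<and>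
      ninf (vsub (approx_basic (p \<alpha>) \<alpha> B b x') (eval_basic b x)) \<le> L * ninf (vsub x' x) + K * 2 powr (- real \<alpha>))"
proof (cases b)
  case (Linear A c)
  have h: "length c = length A" "\<forall>r\<in>set A. length r = d" "d' = length A"
    using bd Linear by (auto split: if_splits)
  show ?thesis
  proof (intro exI conjI allI impI)
    show "0 \<le> rowL A" by (rule rowL_nonneg)
    fix \<alpha> :: nat and x x' :: vec
    assume a: "4 \<le> \<alpha>" "length x = d" "length x' = d" "ninf x \<le> B" "ninf x' \<le> B"
    show "length (approx_basic (p \<alpha>) \<alpha> B b x') = d'" "length (eval_basic b x) = d'"
      using h Linear by auto
    have "ninf (vsub (approx_basic (p \<alpha>) \<alpha> B b x') (eval_basic b x))
        \<le> ninf (vsub (matvec A x') (matvec A x)) + ninf (vsub c c)"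
      unfolding Linear using h by (simp only: approx_basic.simps eval_basic.simps) (rule vadd_err; simp)
    also have "\<dots> \<le> rowL A * ninf (vsub x' x)"
      using matvec_err[OF h(2) a(2,3)] by (simp add: vsub_self)
    finally show "ninf (vsub (approx_basic (p \<alpha>) \<alpha> B b x') (eval_basic b x))
        \<le> rowL A * ninf (vsub x' x) + 0 * 2 powr - real \<alpha>" by simp
  qed
next
  case ReLU
  have h: "d' = d" using bd ReLU by simp
  show ?thesis
  proof (intro exI conjI allI impI)
    show "0 \<le> (1::real)" by simp
    fix \<alpha> :: nat and x x' :: vec
    assume a: "4 \<le> \<alpha>" "length x = d" "length x' = d" "ninf x \<le> B" "ninf x' \<le> B"
    show "length (approx_basic (p \<alpha>) \<alpha> B b x') = d'" "length (eval_basic b x) = d'"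
      using h ReLU a by auto
    show "ninf (vsub (approx_basic (p \<alpha>) \<alpha> B b x') (eval_basic b x))
        \<le> 1 * ninf (vsub x' x) + B * 2 powr - real \<alpha>"
    proof (rule err_le)
      show "length (approx_basic (p \<alpha>) \<alpha> B b x') = length (eval_basic b x)" using ReLU a by simp
      show "0 \<le> 1 * ninf (vsub x' x) + B * 2 powr - real \<alpha>" using ninf_nonneg hB by (intro add_nonneg_nonneg) auto
      fix i assume i: "i < length (approx_basic (p \<alpha>) \<alpha> B b x')"
      then have i': "i < d" using ReLU a by simp
      have "\<bar>rtilde (p \<alpha>) B (x' ! i) - max (x' ! i) 0\<bar> \<le> B * 2 powr - real \<alpha>"
        using rtilde_err[OF spec[OF hp, of \<alpha>]] hB ninf_bound_nth[OF a(5)] i' a by auto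
      moreover have "\<bar>max (x' ! i) 0 - max (x ! i) 0\<bar> \<le> ninf (vsub x' x)"
        using err_nth[of x' x i] i' a by (auto simp: max_def abs_le_iff)
      ultimately have "\<bar>rtilde (p \<alpha>) B (x' ! i) - max (x ! i) 0\<bar> \<le> 1 * ninf (vsub x' x) + B * 2 powr - real \<alpha>"
        by (smt (verit))
      then show "\<bar>approx_basic (p \<alpha>) \<alpha> B b x' ! i - eval_basic b x ! i\<bar>
          \<le> 1 * ninf (vsub x' x) + B * 2 powr - real \<alpha>"
        using ReLU i' a by simp
    qed
  qed
next
  case (MaxPool k0 W)
  have h: "1 \<le> k0" "k0 \<le> 10" "\<forall>w\<in>set W. length w = k0\<^sup>2 \<and> (\<forall>i\<in>set w. i < d)" "d' = length W"
    using bd MaxPool by (auto split: if_splits)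
  show ?thesis
  proof (intro exI conjI allI impI)
    show "0 \<le> (1::real)" by simp
    fix \<alpha> :: nat and x x' :: vec
    assume a: "4 \<le> \<alpha>" "length x = d" "length x' = d" "ninf x \<le> B" "ninf x' \<le> B"
    show "length (approx_basic (p \<alpha>) \<alpha> B b x') = d'" "length (eval_basic b x) = d'"
      using h MaxPool by auto
    show "ninf (vsub (approx_basic (p \<alpha>) \<alpha> B b x') (eval_basic b x))
        \<le> 1 * ninf (vsub x' x) + (56 * B) * 2 powr - real \<alpha>"
    proof (rule err_le)
      show "length (approx_basic (p \<alpha>) \<alpha> B b x') = length (eval_basic b x)" using MaxPool by simp
      show "0 \<le> 1 * ninf (vsub x' x) + (56 * B) * 2 powr - real \<alpha>" using ninf_nonneg hB by (intro add_nonneg_nonneg) auto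
      fix i assume i: "i < length (approx_basic (p \<alpha>) \<alpha> B b x')"
      then have i': "i < length W" using MaxPool by simp
      define w where "w = W ! i"
      have w: "length w = k0\<^sup>2" "\<forall>j\<in>set w. j < d" using h(3) i' unfolding w_def by auto
      define ys' where "ys' = map (\<lambda>j. x' ! j) w"
      define ys where "ys = map (\<lambda>j. x ! j) w"
      have "\<bar>Mtilde (p \<alpha>) \<alpha> B ys' - Max (set ys')\<bar> \<le> 56 * B * 2 powr (- real \<alpha>)"
      proof (rule Mtilde_err[OF spec[OF hp, of \<alpha>] a(1) _ _ h(1,2)])
        show "0 < B" using hB by simp
        show "length ys' = k0\<^sup>2" using w unfolding ys'_def by simp
        show "\<forall>y\<in>set ys'. \<bar>y\<bar> \<le> B" using w a ninf_bound_nth[OF a(5)] unfolding ys'_def by auto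
      qed
      moreover have "\<bar>Max (set ys') - Max (set ys)\<bar> \<le> ninf (vsub x' x)"
      proof (rule Max_lip)
        show "length ys' = length ys" unfolding ys_def ys'_def by simp
        have "0 < k0\<^sup>2" using h(1) by simp
        then show "ys' \<noteq> []" using w unfolding ys'_def by auto
        fix j assume "j < length ys'"
        then have j: "j < length w" unfolding ys'_def by simp
        then have "w ! j < d" using w by auto
        then show "\<bar>ys' ! j - ys ! j\<bar> \<le> ninf (vsub x' x)"
          unfolding ys_def ys'_def using j a by (simp add: err_nth)
      qed
      ultimately have "\<bar>Mtilde (p \<alpha>) \<alpha> B ys' - Max (set ys)\<bar> \<le> 1 * ninf (vsub x' x) + (56 * B) * 2 powr - real \<alpha>"
        by (smt (verit))
      then show "\<bar>approx_basic (p \<alpha>) \<alpha> B b x' ! i - eval_basic b x ! i\<bar>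
          \<le> 1 * ninf (vsub x' x) + (56 * B) * 2 powr - real \<alpha>"
        using MaxPool i' unfolding w_def ys_def ys'_def by simp
    qed
  qed
next
  case Softmax
  have h: "d' = d" using bd Softmax by simp
  show ?thesis
  proof (intro exI conjI allI impI)
    show "0 \<le> 2 * exp (2 * B)" by simp
    fix \<alpha> :: nat and x x' :: vec
    assume a: "4 \<le> \<alpha>" "length x = d" "length x' = d" "ninf x \<le> B" "ninf x' \<le> B"
    show "length (approx_basic (p \<alpha>) \<alpha> B b x') = d'" "length (eval_basic b x) = d'"
      using h Softmax a by auto
    show "ninf (vsub (approx_basic (p \<alpha>) \<alpha> B b x') (eval_basic b x))
        \<le> 2 * exp (2 * B) * ninf (vsub x' x) + 0 * 2 powr - real \<alpha>"
    proof (rule err_le)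
      show "length (approx_basic (p \<alpha>) \<alpha> B b x') = length (eval_basic b x)" using Softmax a by simp
      show "0 \<le> 2 * exp (2 * B) * ninf (vsub x' x) + 0 * 2 powr - real \<alpha>" using ninf_nonneg by simp
      fix i assume i: "i < length (approx_basic (p \<alpha>) \<alpha> B b x')"
      then have i': "i < d" using Softmax a by simp
      show "\<bar>approx_basic (p \<alpha>) \<alpha> B b x' ! i - eval_basic b x ! i\<bar>
          \<le> 2 * exp (2 * B) * ninf (vsub x' x) + 0 * 2 powr - real \<alpha>"
        using softmax_err[OF a(2,3,4,5) i'] Softmax i' a by simp
    qed
  qed
qed



lemma comp_basic_Nil[simp]: "comp_basic ev [] x = x" by (simp add: comp_basic_def)
lemma comp_basic_Cons[simp]: "comp_basic ev (b # G) x = comp_basic ev G (ev b x)" by (simp add: comp_basic_def)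
lemma eval_model_Nil[simp]: "eval_model ev [] x = x" by (simp add: eval_model_def)
lemma eval_model_Cons[simp]: "eval_model ev (blk # F) x = eval_model ev F (eval_block ev blk x)"
  by (simp add: eval_model_def)

lemma bounded_chain_Cons:
  "bounded_chain ev B (b # G) x \<longleftrightarrow> ninf x \<le> B \<and> bounded_chain ev B G (ev b x)"
  unfolding bounded_chain_def
proof (intro iffI conjI allI impI)
  assume h: "\<forall>j<length (b # G). ninf (comp_basic ev (take j (b # G)) x) \<le> B"
  show "ninf x \<le> B" using h[rule_format, of 0] by simp
  fix j assume "j < length G"
  then show "ninf (comp_basic ev (take j G) (ev b x)) \<le> B" using h[rule_format, of "Suc j"] by simp
next
  assume h: "ninf x \<le> B \<and> (\<forall>j<length G. ninf (comp_basic ev (take j G) (ev b x)) \<le> B)"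
  fix j assume j: "j < length (b # G)"
  show "ninf (comp_basic ev (take j (b # G)) x) \<le> B"
  proof (cases j)
    case 0 then show ?thesis using h by simp
  next
    case (Suc k) then show ?thesis using h j by simp
  qed
qed

lemma bounded_model_Cons:
  "bounded_model ev B (blk # F) x \<longleftrightarrow> bounded_block ev B blk x \<and> bounded_model ev B F (eval_block ev blk x)"
  unfolding bounded_model_def
proof (intro iffI conjI allI impI)
  assume h: "\<forall>j<length (blk # F). bounded_block ev B ((blk # F) ! j) (eval_model ev (take j (blk # F)) x)"
  show "bounded_block ev B blk x" using h[rule_format, of 0] by simp
  fix j assume "j < length F"
  then show "bounded_block ev B (F ! j) (eval_model ev (take j F) (eval_block ev blk x))"
    using h[rule_format, of "Suc j"] by simp
next
  assume h: "bounded_block ev B blk x \<and> (\<forall>j<length F. bounded_block ev B (F ! j) (eval_model ev (take j F) (eval_block ev blk x)))"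
  fix j assume j: "j < length (blk # F)"
  show "bounded_block ev B ((blk # F) ! j) (eval_model ev (take j (blk # F)) x)"
  proof (cases j)
    case 0 then show ?thesis using h by simp
  next
    case (Suc k) then show ?thesis using h j by simp
  qed
qed

lemma compose_bound:
  fixes L1 L2 K1 K2 e1 e2 e0 \<epsilon> :: real
  assumes "0 \<le> L2" "e1 \<le> L1 * e0 + K1 * \<epsilon>" "e2 \<le> L2 * e1 + K2 * \<epsilon>"
  shows "e2 \<le> (L2 * L1) * e0 + (L2 * K1 + K2) * \<epsilon>"
proof -
  have "L2 * e1 \<le> L2 * (L1 * e0 + K1 * \<epsilon>)" using assms by (intro mult_left_mono) auto
  then show ?thesis using assms(3) by (simp add: algebra_simps)
qed

context
  fixes p :: "nat \<Rightarrow> real poly" and B :: real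
  assumes hp: "\<forall>\<alpha>. \<forall>a\<in>{0..1}. \<forall>b\<in>{0..1}. \<bar>malpha (p \<alpha>) a b - max a b\<bar> \<le> 2 powr (- real \<alpha>)"
    and hB: "B > 1"
begin

lemma chain_err:
  "chain_dim G d = Some d' \<Longrightarrow> \<exists>L K. 0 \<le> L \<and> (\<forall>\<alpha>\<ge>4. \<forall>x x'. length x = d \<longrightarrow> length x' = d \<longrightarrow>
      bounded_chain eval_basic B G x \<longrightarrow> bounded_chain (approx_basic (p \<alpha>) \<alpha> B) B G x' \<longrightarrow>
      length (comp_basic (approx_basic (p \<alpha>) \<alpha> B) G x') = d' \<and> length (comp_basic eval_basic G x) = d' \<and>
      ninf (vsub (comp_basic (approx_basic (p \<alpha>) \<alpha> B) G x') (comp_basic eval_basic G x))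
        \<le> L * ninf (vsub x' x) + K * 2 powr (- real \<alpha>))"
proof (induct G arbitrary: d)
  case Nil
  then show ?case by (intro exI[of _ 1] exI[of _ 0]) auto
next
  case (Cons b G)
  obtain d1 where d1: "bdim b d = Some d1" "chain_dim G d1 = Some d'"
    using Cons(2) by (auto split: option.splits)
  obtain L1 K1 where LK1: "0 \<le> L1" "\<forall>\<alpha>\<ge>4. \<forall>x x'. length x = d \<longrightarrow> length x' = d \<longrightarrow> ninf x \<le> B \<longrightarrow> ninf x' \<le> B \<longrightarrow>
      length (approx_basic (p \<alpha>) \<alpha> B b x') = d1 \<and> length (eval_basic b x) = d1 \<and>
      ninf (vsub (approx_basic (p \<alpha>) \<alpha> B b x') (eval_basic b x)) \<le> L1 * ninf (vsub x' x) + K1 * 2 powr (- real \<alpha>)"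
    using basic_err[OF hp hB d1(1)] by blast
  obtain L2 K2 where LK2: "0 \<le> L2" "\<forall>\<alpha>\<ge>4. \<forall>x x'. length x = d1 \<longrightarrow> length x' = d1 \<longrightarrow>
      bounded_chain eval_basic B G x \<longrightarrow> bounded_chain (approx_basic (p \<alpha>) \<alpha> B) B G x' \<longrightarrow>
      length (comp_basic (approx_basic (p \<alpha>) \<alpha> B) G x') = d' \<and> length (comp_basic eval_basic G x) = d' \<and>
      ninf (vsub (comp_basic (approx_basic (p \<alpha>) \<alpha> B) G x') (comp_basic eval_basic G x))
        \<le> L2 * ninf (vsub x' x) + K2 * 2 powr (- real \<alpha>)"
    using Cons(1)[OF d1(2)] by blast
  show ?case
  proof (rule exI[of _ "L2 * L1"], rule exI[of _ "L2 * K1 + K2"], intro conjI allI impI)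
    show "0 \<le> L2 * L1" using LK1 LK2 by simp
    fix \<alpha> :: nat and x x' :: vec
    assume a: "4 \<le> \<alpha>" "length x = d" "length x' = d" "bounded_chain eval_basic B (b # G) x"
      "bounded_chain (approx_basic (p \<alpha>) \<alpha> B) B (b # G) x'"
    note b1 = a(4)[unfolded bounded_chain_Cons] and b2 = a(5)[unfolded bounded_chain_Cons]
    note s1 = LK1(2)[rule_format, OF a(1,2,3) b1[THEN conjunct1] b2[THEN conjunct1]]
    note s2 = LK2(2)[rule_format, OF a(1) s1[THEN conjunct2, THEN conjunct1] s1[THEN conjunct1]
        b1[THEN conjunct2] b2[THEN conjunct2]]
    show "length (comp_basic (approx_basic (p \<alpha>) \<alpha> B) (b # G) x') = d'"
         "length (comp_basic eval_basic (b # G) x) = d'" using s2 by auto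
    show "ninf (vsub (comp_basic (approx_basic (p \<alpha>) \<alpha> B) (b # G) x') (comp_basic eval_basic (b # G) x))
        \<le> L2 * L1 * ninf (vsub x' x) + (L2 * K1 + K2) * 2 powr (- real \<alpha>)"
      using compose_bound[OF LK2(1) s1[THEN conjunct2, THEN conjunct2] s2[THEN conjunct2, THEN conjunct2]]
      by simp
  qed
qed

lemma block_err:
  assumes bd: "block_dim blk d = Some d'"
  shows "\<exists>L K. 0 \<le> L \<and> (\<forall>\<alpha>\<ge>4. \<forall>x x'. length x = d \<longrightarrow> length x' = d \<longrightarrow>
      bounded_block eval_basic B blk x \<longrightarrow> bounded_block (approx_basic (p \<alpha>) \<alpha> B) B blk x' \<longrightarrow>
      length (eval_block (approx_basic (p \<alpha>) \<alpha> B) blk x') = d' \<and> length (eval_block eval_basic blk x) = d' \<and>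
      ninf (vsub (eval_block (approx_basic (p \<alpha>) \<alpha> B) blk x') (eval_block eval_basic blk x))
        \<le> L * ninf (vsub x' x) + K * 2 powr (- real \<alpha>))"
proof (cases blk)
  case (Basic b)
  then show ?thesis using basic_err[OF hp hB, of b d d'] bd by simp
next
  case (Residual G P)
  obtain d1 where d1: "chain_dim G d = Some d1" "length P = d1" "\<forall>r\<in>set P. length r = d" "d' = d1"
    using bd Residual by (auto split: option.splits if_splits)
  obtain L1 K1 where LK1: "0 \<le> L1" "\<forall>\<alpha>\<ge>4. \<forall>x x'. length x = d \<longrightarrow> length x' = d \<longrightarrow>
      bounded_chain eval_basic B G x \<longrightarrow> bounded_chain (approx_basic (p \<alpha>) \<alpha> B) B G x' \<longrightarrow>
      length (comp_basic (approx_basic (p \<alpha>) \<alpha> B) G x') = d1 \<and> length (comp_basic eval_basic G x) = d1 \<and>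
      ninf (vsub (comp_basic (approx_basic (p \<alpha>) \<alpha> B) G x') (comp_basic eval_basic G x))
        \<le> L1 * ninf (vsub x' x) + K1 * 2 powr (- real \<alpha>)"
    using chain_err[OF d1(1)] by blast
  show ?thesis
  proof (rule exI[of _ "L1 + rowL P"], rule exI[of _ K1], intro conjI allI impI)
    show "0 \<le> L1 + rowL P" using LK1(1) rowL_nonneg by (intro add_nonneg_nonneg)
    fix \<alpha> :: nat and x x' :: vec
    assume a: "4 \<le> \<alpha>" "length x = d" "length x' = d" "bounded_block eval_basic B blk x"
      "bounded_block (approx_basic (p \<alpha>) \<alpha> B) B blk x'"
    have b1: "bounded_chain eval_basic B G x" and b2: "bounded_chain (approx_basic (p \<alpha>) \<alpha> B) B G x'"
      using a(4,5) Residual by auto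
    note s1 = LK1(2)[rule_format, OF a(1,2,3) b1 b2]
    show "length (eval_block (approx_basic (p \<alpha>) \<alpha> B) blk x') = d'"
         "length (eval_block eval_basic blk x) = d'" using s1 d1 Residual by auto
    have "ninf (vsub (eval_block (approx_basic (p \<alpha>) \<alpha> B) blk x') (eval_block eval_basic blk x))
       \<le> ninf (vsub (comp_basic (approx_basic (p \<alpha>) \<alpha> B) G x') (comp_basic eval_basic G x))
         + ninf (vsub (matvec P x') (matvec P x))"
      unfolding Residual eval_block.simps by (rule vadd_err[of _ d1]) (use s1 d1 in auto)
    also have "\<dots> \<le> (L1 * ninf (vsub x' x) + K1 * 2 powr (- real \<alpha>)) + rowL P * ninf (vsub x' x)"
      by (rule add_mono[OF s1[THEN conjunct2, THEN conjunct2] matvec_err[OF d1(3) a(2,3)]])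
    finally show "ninf (vsub (eval_block (approx_basic (p \<alpha>) \<alpha> B) blk x') (eval_block eval_basic blk x))
        \<le> (L1 + rowL P) * ninf (vsub x' x) + K1 * 2 powr (- real \<alpha>)" by (simp add: algebra_simps)
  qed
qed

lemma model_err:
  "model_dim F d = Some d' \<Longrightarrow> \<exists>L K. 0 \<le> L \<and> (\<forall>\<alpha>\<ge>4. \<forall>x x'. length x = d \<longrightarrow> length x' = d \<longrightarrow>
      bounded_model eval_basic B F x \<longrightarrow> bounded_model (approx_basic (p \<alpha>) \<alpha> B) B F x' \<longrightarrow>
      length (eval_model (approx_basic (p \<alpha>) \<alpha> B) F x') = d' \<and> length (eval_model eval_basic F x) = d' \<and>
      ninf (vsub (eval_model (approx_basic (p \<alpha>) \<alpha> B) F x') (eval_model eval_basic F x))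
        \<le> L * ninf (vsub x' x) + K * 2 powr (- real \<alpha>))"
proof (induct F arbitrary: d)
  case Nil
  then show ?case by (intro exI[of _ 1] exI[of _ 0]) auto
next
  case (Cons blk F)
  obtain d1 where d1: "block_dim blk d = Some d1" "model_dim F d1 = Some d'"
    using Cons(2) by (auto split: option.splits)
  obtain L1 K1 where LK1: "0 \<le> L1" "\<forall>\<alpha>\<ge>4. \<forall>x x'. length x = d \<longrightarrow> length x' = d \<longrightarrow>
      bounded_block eval_basic B blk x \<longrightarrow> bounded_block (approx_basic (p \<alpha>) \<alpha> B) B blk x' \<longrightarrow>
      length (eval_block (approx_basic (p \<alpha>) \<alpha> B) blk x') = d1 \<and> length (eval_block eval_basic blk x) = d1 \<and>
      ninf (vsub (eval_block (approx_basic (p \<alpha>) \<alpha> B) blk x') (eval_block eval_basic blk x))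
        \<le> L1 * ninf (vsub x' x) + K1 * 2 powr (- real \<alpha>)"
    using block_err[OF d1(1)] by blast
  obtain L2 K2 where LK2: "0 \<le> L2" "\<forall>\<alpha>\<ge>4. \<forall>x x'. length x = d1 \<longrightarrow> length x' = d1 \<longrightarrow>
      bounded_model eval_basic B F x \<longrightarrow> bounded_model (approx_basic (p \<alpha>) \<alpha> B) B F x' \<longrightarrow>
      length (eval_model (approx_basic (p \<alpha>) \<alpha> B) F x') = d' \<and> length (eval_model eval_basic F x) = d' \<and>
      ninf (vsub (eval_model (approx_basic (p \<alpha>) \<alpha> B) F x') (eval_model eval_basic F x))
        \<le> L2 * ninf (vsub x' x) + K2 * 2 powr (- real \<alpha>)"
    using Cons(1)[OF d1(2)] by blast
  show ?case
  proof (rule exI[of _ "L2 * L1"], rule exI[of _ "L2 * K1 + K2"], intro conjI allI impI)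
    show "0 \<le> L2 * L1" using LK1 LK2 by simp
    fix \<alpha> :: nat and x x' :: vec
    assume a: "4 \<le> \<alpha>" "length x = d" "length x' = d" "bounded_model eval_basic B (blk # F) x"
      "bounded_model (approx_basic (p \<alpha>) \<alpha> B) B (blk # F) x'"
    note b1 = a(4)[unfolded bounded_model_Cons] and b2 = a(5)[unfolded bounded_model_Cons]
    note s1 = LK1(2)[rule_format, OF a(1,2,3) b1[THEN conjunct1] b2[THEN conjunct1]]
    note s2 = LK2(2)[rule_format, OF a(1) s1[THEN conjunct2, THEN conjunct1] s1[THEN conjunct1]
        b1[THEN conjunct2] b2[THEN conjunct2]]
    show "length (eval_model (approx_basic (p \<alpha>) \<alpha> B) (blk # F) x') = d'"
         "length (eval_model eval_basic (blk # F) x) = d'" using s2 by auto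
    show "ninf (vsub (eval_model (approx_basic (p \<alpha>) \<alpha> B) (blk # F) x') (eval_model eval_basic (blk # F) x))
        \<le> L2 * L1 * ninf (vsub x' x) + (L2 * K1 + K2) * 2 powr (- real \<alpha>)"
      using compose_bound[OF LK2(1) s1[THEN conjunct2, THEN conjunct2] s2[THEN conjunct2, THEN conjunct2]]
      by simp
  qed
qed

end

theorem theorem5:
  fixes p :: "nat \<Rightarrow> real poly" and B :: real and F :: "block list" and d :: nat
  assumes hp: "\<forall>\<alpha>. \<forall>a\<in>{0..1}. \<forall>b\<in>{0..1}. \<bar>malpha (p \<alpha>) a b - max a b\<bar> \<le> 2 powr (- real \<alpha>)"
    and hB: "B > 1"
    and hF: "F \<noteq> []"
    and hwf: "wf_model d F"
  shows "\<exists>C. \<forall>\<alpha>\<ge>4. \<forall>x. length x = d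
           \<and> bounded_model eval_basic B F x
           \<and> bounded_model (approx_basic (p \<alpha>) \<alpha> B) B F x
           \<longrightarrow> ninf (vsub (eval_model (approx_basic (p \<alpha>) \<alpha> B) F x) (eval_model eval_basic F x))
               \<le> C * 2 powr (- real \<alpha>)"
proof -
  obtain d' where d': "model_dim F d = Some d'" using hwf unfolding wf_model_def by auto
  obtain L K where LK: "\<forall>\<alpha>\<ge>4. \<forall>x x'. length x = d \<longrightarrow> length x' = d \<longrightarrow>
      bounded_model eval_basic B F x \<longrightarrow> bounded_model (approx_basic (p \<alpha>) \<alpha> B) B F x' \<longrightarrow>
      length (eval_model (approx_basic (p \<alpha>) \<alpha> B) F x') = d' \<and> length (eval_model eval_basic F x) = d' \<and>
      ninf (vsub (eval_model (approx_basic (p \<alpha>) \<alpha> B) F x') (eval_model eval_basic F x))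
        \<le> L * ninf (vsub x' x) + K * 2 powr (- real \<alpha>)"
    using model_err[OF hp hB d'] by blast
  show ?thesis
  proof (intro exI[of _ K] allI impI)
    fix \<alpha> :: nat and x :: vec
    assume a: "4 \<le> \<alpha>"
      "length x = d \<and> bounded_model eval_basic B F x \<and> bounded_model (approx_basic (p \<alpha>) \<alpha> B) B F x"
    show "ninf (vsub (eval_model (approx_basic (p \<alpha>) \<alpha> B) F x) (eval_model eval_basic F x))
               \<le> K * 2 powr (- real \<alpha>)"
      using LK[rule_format, OF a(1), of x x] a(2) by (simp add: vsub_self)
  qed
qed

end
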